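(* Let $\{A_n\}_{n\geqslant 1}$ be i.i.d. nonnegative random variables with Laplace–Stieltjes transform $\alpha(s)=\mathbb{E}[e^{-sA_1}]$, and let $\{B_n\}_{n\geqslant 1}$ be i.i.d. exponentially distributed with rate $\mu>0$, independent of $\{A_n\}$. Let $W_1=0$ and $W_{n+1}=\max\{0,\,B_{n+1}-A_n-W_n\}$ for $n\geqslant 1$, and let $C=\inf\{k\geqslant 1: W_{1+k}=0\}$ be the length of a regeneration cycle. Then $$\mathbb{P}[C=n]=\begin{cases}1-\alpha(\mu), & n=1,\\[2pt] \left[1-\tfrac12\alpha(\mu)\right]\left[\tfrac12\alpha(\mu)\right]^{n-2}\alpha(\mu), & n\geqslant 2.\end{cases}$$ *)

theory Defs
  imports "HOL-Probability.Probability"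
begin

(* Waiting-time recursion, 1-based as in the paper:
   W_1 = 0, W_{n+1} = max 0 (B_{n+1} - A_n - W_n). Index 0 is an unused dummy. *)
fun Wseq :: "(nat \<Rightarrow> 'a \<Rightarrow> real) \<Rightarrow> (nat \<Rightarrow> 'a \<Rightarrow> real) \<Rightarrow> nat \<Rightarrow> 'a \<Rightarrow> real" where
  "Wseq A B 0 \<omega> = 0"
| "Wseq A B (Suc 0) \<omega> = 0"
| "Wseq A B (Suc (Suc n)) \<omega> = max 0 (B (Suc (Suc n)) \<omega> - A (Suc n) \<omega> - Wseq A B (Suc n) \<omega>)"

(* C = inf {k >= 1. W_{1+k} = 0}; if the set is empty, Inf on nat gives 0
   (i.e. the value 0 encodes C = infinity, never equal to any n >= 1). *)
definition cycle_len :: "(nat \<Rightarrow> 'a \<Rightarrow> real) \<Rightarrow> (nat \<Rightarrow> 'a \<Rightarrow> real) \<Rightarrow> 'a \<Rightarrow> nat" where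
  "cycle_len A B \<omega> = Inf {k. k \<ge> 1 \<and> Wseq A B (1 + k) \<omega> = 0}"

end

theory Submission
  imports Defs
begin


fun w :: "(nat + nat \<Rightarrow> real) \<Rightarrow> nat \<Rightarrow> real" where
  "w x 0 = 0"
| "w x (Suc 0) = 0"
| "w x (Suc (Suc n)) = max 0 (x (Inr (Suc (Suc n))) - x (Inl (Suc n)) - w x (Suc n))"

lemma w_nonneg: "0 \<le> w x k" by (induct x k rule: w.induct) auto

lemma w_cong: "(\<And>j. 1 \<le> j \<Longrightarrow> j < k \<Longrightarrow> x (Inl j) = y (Inl j)) \<Longrightarrow>
   (\<And>j. 2 \<le> j \<Longrightarrow> j \<le> k \<Longrightarrow> x (Inr j) = y (Inr j)) \<Longrightarrow> w x k = w y k"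
  by (induct x k rule: w.induct) auto

definition pos where "pos x k = (\<forall>j\<in>{2..k}. 0 < w x j)"

lemma pos_cong: "(\<And>j. 1 \<le> j \<Longrightarrow> j < k \<Longrightarrow> x (Inl j) = y (Inl j)) \<Longrightarrow>
   (\<And>j. 2 \<le> j \<Longrightarrow> j \<le> k \<Longrightarrow> x (Inr j) = y (Inr j)) \<Longrightarrow> pos x k = pos y k"
proof -
  assume a1: "\<And>j. 1 \<le> j \<Longrightarrow> j < k \<Longrightarrow> x (Inl j) = y (Inl j)"
     and a2: "\<And>j. 2 \<le> j \<Longrightarrow> j \<le> k \<Longrightarrow> x (Inr j) = y (Inr j)"
  have "\<And>j. j \<in> {2..k} \<Longrightarrow> w x j = w y j"
    by (rule w_cong) (use a1 a2 in auto)
  then show ?thesis unfolding pos_def by auto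
qed

lemma pos_Suc: "1 \<le> k \<Longrightarrow> pos x (Suc k) = (pos x k \<and> 0 < w x (Suc k))"
  unfolding pos_def by (auto simp: atLeastAtMostSuc_conv)

lemma pos_1: "pos x (Suc 0)" unfolding pos_def by auto

definition J :: "nat \<Rightarrow> (nat + nat) set" where "J k = Inl ` {1..<k} \<union> Inr ` {2..k}"

lemma J_Suc: "1 \<le> k \<Longrightarrow> J (Suc k) = insert (Inr (Suc k)) (insert (Inl k) (J k))"
  unfolding J_def by (auto simp: atLeastAtMostSuc_conv atLeastLessThanSuc)

lemma finite_J: "finite (J k)" unfolding J_def by auto
lemma J_1: "J (Suc 0) = {}" unfolding J_def by auto
lemma notin_J: "Inl k \<notin> J k" "Inr (Suc k) \<notin> insert (Inl k) (J k)" unfolding J_def by auto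

lemma Wseq_w: "Wseq A B k \<omega> = w (\<lambda>i. case_sum A B i \<omega>) k"
  by (induct A B k \<omega> rule: Wseq.induct) auto

lemma cycle_len_iff:
  assumes "n \<ge> 1"
  shows "cycle_len A B \<omega> = n \<longleftrightarrow> (pos (\<lambda>i. case_sum A B i \<omega>) n \<and> \<not> pos (\<lambda>i. case_sum A B i \<omega>) (Suc n))
     \<or> ((\<forall>k. pos (\<lambda>i. case_sum A B i \<omega>) k) \<and> (LEAST m::nat. False) = n)"
proof -
  define x where "x = (\<lambda>i. case_sum A B i \<omega>)"
  define S where "S = {k. k \<ge> 1 \<and> w x (1 + k) = 0}"
  have cl: "cycle_len A B \<omega> = Inf S" unfolding cycle_len_def S_def x_def Wseq_w ..
  have iff: "pos x n \<and> \<not> pos x (Suc n) \<longleftrightarrow> n \<in> S \<and> (\<forall>k\<in>S. n \<le> k)"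
  proof
    assume h: "pos x n \<and> \<not> pos x (Suc n)"
    then have "w x (Suc n) = 0" using pos_Suc[OF assms] w_nonneg[of x "Suc n"] by auto
    moreover have "\<forall>k\<in>S. n \<le> k"
    proof
      fix k assume "k \<in> S"
      show "n \<le> k"
      proof (rule ccontr)
        assume "\<not> n \<le> k"
        then have "1 + k \<in> {2..n}" using \<open>k \<in> S\<close> by (auto simp: S_def)
        then have "0 < w x (1+k)" using h unfolding pos_def by blast
        then show False using \<open>k \<in> S\<close> unfolding S_def by auto
      qed
    qed
    ultimately show "n \<in> S \<and> (\<forall>k\<in>S. n \<le> k)" using assms by (auto simp: S_def)
  next
    assume h: "n \<in> S \<and> (\<forall>k\<in>S. n \<le> k)"
    have "pos x n" unfolding pos_def
    proof
      fix j assume j: "j \<in> {2..n}"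
      show "0 < w x j"
      proof (rule ccontr)
        assume "\<not> 0 < w x j"
        then have "j - 1 \<in> S" using j w_nonneg[of x j] by (auto simp: S_def)
        then show False using h j by force
      qed
    qed
    then show "pos x n \<and> \<not> pos x (Suc n)" using h pos_Suc[OF assms] by (auto simp: S_def)
  qed
  have Se: "S = {} \<longleftrightarrow> (\<forall>k. pos x k)"
  proof
    assume S0: "S = {}"
    have "0 < w x j" if j: "j \<ge> 2" for j
    proof (rule ccontr)
      assume "\<not> 0 < w x j"
      then have "w x j = 0" using w_nonneg[of x j] by simp
      then have "j - 1 \<in> S" using j unfolding S_def by auto
      then show False using S0 by simp
    qed
    then show "\<forall>k. pos x k" unfolding pos_def by auto
  next
    assume h: "\<forall>k. pos x k"
    show "S = {}"
    proof (rule ccontr)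
      assume "S \<noteq> {}"
      then obtain k where k: "k \<in> S" by blast
      have "pos x (1+k)" using h by blast
      moreover have "1+k \<in> {2..1+k}" using k unfolding S_def by auto
      ultimately have "0 < w x (1+k)" unfolding pos_def by blast
      then show False using k unfolding S_def by auto
    qed
  qed
  show ?thesis
  proof (cases "S = {}")
    case True
    then show ?thesis using cl Se unfolding x_def[symmetric] by (simp add: Inf_nat_def)
  next
    case False
    have "Inf S = n \<longleftrightarrow> n \<in> S \<and> (\<forall>k\<in>S. n \<le> k)"
    proof
      assume "Inf S = n"
      then show "n \<in> S \<and> (\<forall>k\<in>S. n \<le> k)" using False
        by (metis Inf_nat_def1 cInf_lower bdd_below_bot)
    next
      assume "n \<in> S \<and> (\<forall>k\<in>S. n \<le> k)"
      then show "Inf S = n" by (intro cInf_eq_minimum) auto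
    qed
    then show ?thesis using iff cl x_def False Se by auto
  qed
qed



lemma memoryless:
  fixes g :: "real \<Rightarrow> ennreal"
  assumes mu: "0 < \<mu>" and c: "0 \<le> c" and g[measurable]: "g \<in> borel_measurable borel"
  shows "(\<integral>\<^sup>+b. (if c < b then g (b - c) else 0) \<partial>density lborel (exponential_density \<mu>))
       = ennreal (exp (- \<mu> * c)) * (\<integral>\<^sup>+u. g u \<partial>density lborel (exponential_density \<mu>))"
proof -
  have "(\<integral>\<^sup>+b. (if c < b then g (b - c) else 0) \<partial>density lborel (exponential_density \<mu>))
      = (\<integral>\<^sup>+b. ennreal (exponential_density \<mu> b) * (if c < b then g (b - c) else 0) \<partial>lborel)"
    by (subst nn_integral_density) auto
  also have "\<dots> = ennreal \<bar>1::real\<bar> * (\<integral>\<^sup>+u. ennreal (exponential_density \<mu> (c + 1 * u)) * (if c < c + 1 * u then g (c + 1 * u - c) else 0) \<partial>lborel)"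
    by (rule nn_integral_real_affine[where c=1 and t=c]) auto
  also have "\<dots> = (\<integral>\<^sup>+u. ennreal (exp (- \<mu> * c)) * (ennreal (exponential_density \<mu> u) * g u) \<partial>lborel)"
  proof (simp, intro nn_integral_cong_AE)
    show "AE u in lborel. ennreal (exponential_density \<mu> (c + u)) * (if 0 < u then g (c + 1 * u - c) else 0) =
         ennreal (exp (- (\<mu> * c))) * (ennreal (exponential_density \<mu> u) * g u)"
      using AE_lborel_singleton[of 0]
    proof eventually_elim
      case (elim u)
      show ?case
      proof (cases "0 < u")
        case True
        have "exponential_density \<mu> (c + u) = exp (- (\<mu> * c)) * exponential_density \<mu> u"
          using True c by (simp add: exponential_density_def algebra_simps flip: exp_add)
        then show ?thesis using True mu
          by (simp add: ennreal_mult mult.assoc)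
      next
        case False
        then have "u < 0" using elim by simp
        then show ?thesis by (simp add: exponential_density_def)
      qed
    qed
  qed
  also have "\<dots> = ennreal (exp (- \<mu> * c)) * (\<integral>\<^sup>+u. ennreal (exponential_density \<mu> u) * g u \<partial>lborel)"
    by (rule nn_integral_cmult) auto
  also have "\<dots> = ennreal (exp (- \<mu> * c)) * (\<integral>\<^sup>+u. g u \<partial>density lborel (exponential_density \<mu>))"
    by (subst nn_integral_density) auto
  finally show ?thesis .
qed

lemma exp_half:
  assumes mu: "0 < \<mu>"
  shows "(\<integral>\<^sup>+u. ennreal (exp (- \<mu> * u)) \<partial>density lborel (exponential_density \<mu>)) = ennreal (1/2)"
proof -
  have "(\<integral>\<^sup>+u. ennreal (exp (- \<mu> * u)) \<partial>density lborel (exponential_density \<mu>))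
     = (\<integral>\<^sup>+u. ennreal (exponential_density \<mu> u) * ennreal (exp (- \<mu> * u)) \<partial>lborel)"
    by (subst nn_integral_density) auto
  also have "\<dots> = (\<integral>\<^sup>+u. ennreal (1/2) * ennreal (exponential_density (2*\<mu>) u) \<partial>lborel)"
  proof (intro nn_integral_cong)
    fix u :: real
    have eq: "exponential_density \<mu> u * exp (- \<mu> * u) = 1/2 * exponential_density (2*\<mu>) u"
      by (simp add: exponential_density_def algebra_simps flip: exp_add)
    have "ennreal (exponential_density \<mu> u) * ennreal (exp (- \<mu> * u)) = ennreal (exponential_density \<mu> u * exp (- \<mu> * u))"
      by (rule ennreal_mult[symmetric]) (use mu exponential_density_nonneg in auto)
    also have "\<dots> = ennreal (1/2 * exponential_density (2*\<mu>) u)" by (simp only: eq)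
    also have "\<dots> = ennreal (1/2) * ennreal (exponential_density (2*\<mu>) u)"
      by (rule ennreal_mult) (use mu exponential_density_nonneg in auto)
    finally show "ennreal (exponential_density \<mu> u) * ennreal (exp (- \<mu> * u)) = ennreal (1/2) * ennreal (exponential_density (2*\<mu>) u)" .
  qed
  also have "\<dots> = ennreal (1/2) * (\<integral>\<^sup>+u. ennreal (exponential_density (2*\<mu>) u) \<partial>lborel)"
    by (rule nn_integral_cmult) auto
  also have "(\<integral>\<^sup>+u. ennreal (exponential_density (2*\<mu>) u) \<partial>lborel) = 1"
  proof -
    interpret p: prob_space "density lborel (exponential_density (2*\<mu>))"
      using mu by (intro prob_space_exponential_density) simp
    have "(\<integral>\<^sup>+u. ennreal (exponential_density (2*\<mu>) u) \<partial>lborel) = (\<integral>\<^sup>+u. 1 \<partial>density lborel (exponential_density (2*\<mu>)))"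
      by (subst nn_integral_density) auto
    also have "\<dots> = 1" using p.emeasure_space_1 by simp
    finally show ?thesis .
  qed
  finally show ?thesis by simp
qed



lemma J_mono: "k \<le> m \<Longrightarrow> J k \<subseteq> J m" unfolding J_def by auto

lemma meas_comp:
  assumes "\<And>i. sets (N i) = sets borel" "i \<in> I"
  shows "(\<lambda>x. x i) \<in> borel_measurable (PiM I N)"
  using measurable_component_singleton[OF assms(2), of N] measurable_cong_sets[OF refl assms(1)[of i]]
  by blast

lemma meas_w:
  fixes N :: "nat + nat \<Rightarrow> real measure"
  assumes N: "\<And>i. sets (N i) = sets borel" and "J k \<subseteq> I"
  shows "(\<lambda>x. w x k) \<in> borel_measurable (PiM I N)"
  using assms(2)
proof (induction k rule: nat_less_induct)
  case (1 k)
  show ?case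
  proof (cases k)
    case 0 then show ?thesis by simp
  next
    case (Suc m)
    show ?thesis
    proof (cases m)
      case 0 then show ?thesis using Suc by simp
    next
      case (Suc n)
      have "J (Suc (Suc n)) \<subseteq> I" using 1 \<open>k = Suc m\<close> Suc by simp
      then have i1: "Inr (Suc (Suc n)) \<in> I" and i2: "Inl (Suc n) \<in> I" unfolding J_def by auto
      have "J (Suc n) \<subseteq> I" using J_mono[of "Suc n" "Suc (Suc n)"] \<open>J (Suc (Suc n)) \<subseteq> I\<close> by auto
      then have ih: "(\<lambda>x. w x (Suc n)) \<in> borel_measurable (PiM I N)"
        using 1 \<open>k = Suc m\<close> Suc by auto
      note [measurable] = ih meas_comp[OF N i1] meas_comp[OF N i2]
      show ?thesis using \<open>k = Suc m\<close> Suc by simp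
    qed
  qed
qed

lemma meas_pos:
  fixes N :: "nat + nat \<Rightarrow> real measure"
  assumes N: "\<And>i. sets (N i) = sets borel" and "J k \<subseteq> I"
  shows "Measurable.pred (PiM I N) (\<lambda>x. pos x k)"
proof -
  have "Measurable.pred (PiM I N) (\<lambda>x. 0 < w x j)" if "j \<in> {2..k}" for j
  proof -
    have [measurable]: "(\<lambda>x. w x j) \<in> borel_measurable (PiM I N)"
      using that assms J_mono[of j k] by (intro meas_w) auto
    show ?thesis by (rule borel_measurable_pred_less) auto
  qed
  then show ?thesis unfolding pos_def by (intro pred_intros_finite) auto
qed



locale cyc = prob_space M for M :: "'a measure" +
  fixes A B :: "nat \<Rightarrow> 'a \<Rightarrow> real" and \<mu> :: real
  assumes mu: "\<mu> > 0"
    and indep: "indep_vars (\<lambda>_. borel) (\<lambda>i. case i of Inl k \<Rightarrow> A k | Inr k \<Rightarrow> B k)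
                 ({Inl k | k. k \<ge> 1} \<union> {Inr k | k. k \<ge> 1})"
    and A_nonneg: "\<And>k \<omega>. k \<ge> 1 \<Longrightarrow> \<omega> \<in> space M \<Longrightarrow> A k \<omega> \<ge> 0"
    and A_ident: "\<And>k. k \<ge> 1 \<Longrightarrow> distr M borel (A k) = distr M borel (A 1)"
    and B_exp: "\<And>k. k \<ge> 1 \<Longrightarrow> distributed M lborel (B k) (exponential_density \<mu>)"
begin

definition "I0 = {Inl k | k. k \<ge> 1} \<union> {Inr k | k. k \<ge> (1::nat)}"
definition "PA = distr M borel (A 1)"
definition "PB = density lborel (exponential_density \<mu>)"
definition "P = case_sum (\<lambda>_. PA) (\<lambda>_. PB)"
definition "\<alpha> = integral\<^sup>L M (\<lambda>\<omega>. exp (- \<mu> * A 1 \<omega>))"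

lemma rv: "i \<in> I0 \<Longrightarrow> random_variable borel (case_sum A B i)"
  using indep unfolding indep_vars_def I0_def by auto

lemma rvA: "k \<ge> 1 \<Longrightarrow> A k \<in> borel_measurable M"
  using rv[of "Inl k"] unfolding I0_def by auto

lemma rvB: "k \<ge> 1 \<Longrightarrow> B k \<in> borel_measurable M"
  using rv[of "Inr k"] unfolding I0_def by auto

lemma J_I0: "k \<ge> 1 \<Longrightarrow> J k \<subseteq> I0" unfolding J_def I0_def by auto

lemma distr_X: "i \<in> I0 \<Longrightarrow> distr M borel (case_sum A B i) = P i"
proof -
  assume "i \<in> I0"
  then consider k where "k \<ge> 1" "i = Inl k" | k where "k \<ge> 1" "i = Inr k" unfolding I0_def by auto
  then show ?thesis
  proof cases
    case 1 then show ?thesis by (simp add: P_def PA_def A_ident[OF 1(1)])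
  next
    case 2
    have "distr M lborel (B k) = PB" using B_exp[OF 2(1)] unfolding distributed_def PB_def by simp
    moreover have "distr M borel (B k) = distr M lborel (B k)" by (rule distr_cong) auto
    ultimately show ?thesis using 2 by (simp add: P_def)
  qed
qed

lemma prob_PA: "prob_space PA" unfolding PA_def by (rule prob_space_distr[OF rvA]) simp
lemma prob_PB: "prob_space PB" unfolding PB_def by (rule prob_space_exponential_density[OF mu])
lemma prob_P: "prob_space (P i)" by (cases i) (auto simp: P_def prob_PA prob_PB)
lemma sets_PA: "sets PA = sets borel" by (simp add: PA_def)
lemma sets_PB: "sets PB = sets borel" by (simp add: PB_def)
lemma sets_P: "sets (P i) = sets borel" by (cases i) (auto simp: P_def sets_PA sets_PB)

lemma AE_PA: "AE a in PA. 0 \<le> a"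
  unfolding PA_def using A_nonneg[of 1] rvA[of 1]
  by (subst AE_distr_iff) auto

lemma alpha_e: "(\<integral>\<^sup>+a. ennreal (exp (- \<mu> * a)) \<partial>PA) = ennreal \<alpha>"
proof -
  have "(\<integral>\<^sup>+a. ennreal (exp (- \<mu> * a)) \<partial>PA) = (\<integral>\<^sup>+\<omega>. ennreal (exp (- \<mu> * A 1 \<omega>)) \<partial>M)"
    unfolding PA_def using rvA[of 1] by (subst nn_integral_distr) auto
  also have "\<dots> = ennreal \<alpha>" unfolding \<alpha>_def
  proof (rule nn_integral_eq_integral)
    show "integrable M (\<lambda>\<omega>. exp (- \<mu> * A 1 \<omega>))"
    proof (rule integrable_const_bound[where B=1])
      show "AE x in M. norm (exp (- \<mu> * A 1 x)) \<le> 1"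
        using A_nonneg[of 1] mu by (auto intro!: AE_I2 simp: mult_nonneg_nonneg)
      show "(\<lambda>\<omega>. exp (- \<mu> * A 1 \<omega>)) \<in> borel_measurable M" using rvA[of 1] by measurable
    qed
  qed auto
  finally show ?thesis .
qed

lemma alpha_bounds: "0 \<le> \<alpha>" "\<alpha> \<le> 1"
proof -
  have m: "(\<lambda>\<omega>. exp (- \<mu> * A 1 \<omega>)) \<in> borel_measurable M" using rvA[of 1] by measurable
  have "AE x in M. exp (- \<mu> * A 1 x) \<le> 1"
    using A_nonneg[of 1] mu by (auto intro!: AE_I2 simp: mult_nonneg_nonneg)
  then have "\<alpha> \<le> expectation (\<lambda>_. 1)" unfolding \<alpha>_def
    by (intro integral_mono_AE integrable_const_bound[where B=1] m) (auto intro!: AE_I2)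
  then show "\<alpha> \<le> 1" by (simp add: prob_space)
  show "0 \<le> \<alpha>" unfolding \<alpha>_def by (rule integral_nonneg_AE) auto
qed


lemma ps: "product_sigma_finite P"
  unfolding product_sigma_finite_def
  using prob_P by (auto intro: prob_space_imp_sigma_finite)

lemma P_simps[simp]: "P (Inl k) = PA" "P (Inr k) = PB" by (auto simp: P_def)

lemma step:
  assumes k: "1 \<le> k" and g[measurable]: "g \<in> borel_measurable borel"
  shows "(\<integral>\<^sup>+x. (if pos x (Suc k) then g (w x (Suc k)) else 0) \<partial>PiM (J (Suc k)) P)
    = (\<integral>\<^sup>+x. (if pos x k then ennreal (exp (- \<mu> * w x k)) else 0) \<partial>PiM (J k) P) * ennreal \<alpha> * (\<integral>\<^sup>+u. g u \<partial>PB)"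
proof -
  interpret ps: product_sigma_finite P by (rule ps)
  interpret pb: prob_space PB by (rule prob_PB)
  define I1 where "I1 = insert (Inl k) (J k)"
  have J1: "J (Suc k) = insert (Inr (Suc k)) I1" unfolding I1_def using J_Suc[OF k] .
  have fin: "finite I1" "finite (J k)" unfolding I1_def by (auto simp: finite_J)
  have nin: "Inr (Suc k) \<notin> I1" "Inl k \<notin> J k" unfolding I1_def using notin_J by auto
  define F where "F x = (if pos x (Suc k) then g (w x (Suc k)) else 0)" for x
  define G where "G c = (\<integral>\<^sup>+b. (if c < b then g (b - c) else 0) \<partial>PB)" for c
  define H where "H x = (if pos x k then G (x (Inl k) + w x k) else 0)" for x
  define Gi where "Gi = (\<integral>\<^sup>+u. g u \<partial>PB)"
  have [measurable]: "(\<lambda>x. w x (Suc k)) \<in> borel_measurable (PiM (J (Suc k)) P)"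
    by (rule meas_w[OF sets_P]) simp
  have [measurable]: "Measurable.pred (PiM (J (Suc k)) P) (\<lambda>x. pos x (Suc k))"
    by (rule meas_pos[OF sets_P]) simp
  have mF: "F \<in> borel_measurable (PiM (J (Suc k)) P)" unfolding F_def by measurable
  have [measurable]: "(\<lambda>x. w x k) \<in> borel_measurable (PiM I1 P)"
    by (rule meas_w[OF sets_P]) (auto simp: I1_def)
  have [measurable]: "Measurable.pred (PiM I1 P) (\<lambda>x. pos x k)"
    by (rule meas_pos[OF sets_P]) (auto simp: I1_def)
  have [measurable]: "(\<lambda>x. x (Inl k)) \<in> borel_measurable (PiM I1 P)"
    by (rule meas_comp[OF sets_P]) (auto simp: I1_def)
  have [measurable_cong]: "sets PB = sets borel" by (rule sets_PB)
  have [measurable_cong]: "sets PA = sets borel" by (rule sets_PA)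
  have [measurable]: "G \<in> borel_measurable borel" unfolding G_def
    by measurable
  have mH: "H \<in> borel_measurable (PiM I1 P)" unfolding H_def by measurable
  have "(\<integral>\<^sup>+x. F x \<partial>PiM (J (Suc k)) P) = (\<integral>\<^sup>+x. (\<integral>\<^sup>+b. F (x(Inr (Suc k) := b)) \<partial>PB) \<partial>PiM I1 P)"
    unfolding J1 using ps.product_nn_integral_insert[OF fin(1) nin(1), of F] mF J1 by simp
  also have "\<dots> = (\<integral>\<^sup>+x. H x \<partial>PiM I1 P)"
  proof (rule nn_integral_cong)
    fix x assume "x \<in> space (PiM I1 P)"
    let ?y = "\<lambda>b. x(Inr (Suc k) := b)"
    have wk: "w (?y b) k = w x k" for b by (rule w_cong) auto
    have pk: "pos (?y b) k = pos x k" for b by (rule pos_cong) auto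
    obtain m where m: "k = Suc m" using k by (cases k) auto
    have wS: "w (?y b) (Suc k) = max 0 (b - x (Inl k) - w x k)" for b
      using wk[of b] unfolding m by simp
    have "F (?y b) = (if pos x k then (if x (Inl k) + w x k < b then g (b - (x (Inl k) + w x k)) else 0) else 0)" for b
      unfolding F_def pos_Suc[OF k] pk wS by (auto simp: algebra_simps)
    then show "(\<integral>\<^sup>+b. F (?y b) \<partial>PB) = H x" unfolding H_def G_def by simp
  qed
  also have "\<dots> = (\<integral>\<^sup>+x. (\<integral>\<^sup>+a. H (x(Inl k := a)) \<partial>PA) \<partial>PiM (J k) P)"
    unfolding I1_def using ps.product_nn_integral_insert[OF fin(2) nin(2), of H] mH I1_def by simp
  also have "\<dots> = (\<integral>\<^sup>+x. (if pos x k then ennreal (exp (- \<mu> * w x k)) else 0) * (ennreal \<alpha> * Gi) \<partial>PiM (J k) P)"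
  proof (rule nn_integral_cong)
    fix x assume "x \<in> space (PiM (J k) P)"
    let ?y = "\<lambda>a. x(Inl k := a)"
    have wk: "w (?y a) k = w x k" for a by (rule w_cong) auto
    have pk: "pos (?y a) k = pos x k" for a by (rule pos_cong) auto
    have Hy: "H (?y a) = (if pos x k then G (a + w x k) else 0)" for a
      unfolding H_def wk pk by simp
    show "(\<integral>\<^sup>+a. H (?y a) \<partial>PA) = (if pos x k then ennreal (exp (- \<mu> * w x k)) else 0) * (ennreal \<alpha> * Gi)"
    proof (cases "pos x k")
      case False then show ?thesis unfolding Hy by simp
    next
      case True
      have "(\<integral>\<^sup>+a. H (?y a) \<partial>PA) = (\<integral>\<^sup>+a. ennreal (exp (- \<mu> * w x k)) * (ennreal (exp (- \<mu> * a)) * Gi) \<partial>PA)"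
      proof (rule nn_integral_cong_AE)
        show "AE a in PA. H (?y a) = ennreal (exp (- \<mu> * w x k)) * (ennreal (exp (- \<mu> * a)) * Gi)"
          using AE_PA
        proof eventually_elim
          case (elim a)
          have "G (a + w x k) = ennreal (exp (- \<mu> * (a + w x k))) * Gi"
            unfolding G_def Gi_def PB_def
            by (rule memoryless[OF mu _ g]) (use elim w_nonneg in auto)
          also have "\<dots> = ennreal (exp (- \<mu> * w x k)) * (ennreal (exp (- \<mu> * a)) * Gi)"
          proof -
            have "exp (- \<mu> * (a + w x k)) = exp (- \<mu> * w x k) * exp (- \<mu> * a)"
              by (simp add: algebra_simps flip: exp_add)
            then show ?thesis by (simp add: ennreal_mult mult.assoc)
          qed
          finally show ?case unfolding Hy using True by simp
        qed
      qed
      also have "\<dots> = ennreal (exp (- \<mu> * w x k)) * ((\<integral>\<^sup>+a. ennreal (exp (- \<mu> * a)) \<partial>PA) * Gi)"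
      proof -
        have "(\<lambda>a::real. ennreal (exp (- \<mu> * a))) \<in> borel_measurable borel" by measurable
        then have me: "(\<lambda>a::real. ennreal (exp (- \<mu> * a))) \<in> borel_measurable PA"
          using measurable_cong_sets[OF sets_PA refl] by blast
        then have me2: "(\<lambda>a::real. ennreal (exp (- \<mu> * a)) * Gi) \<in> borel_measurable PA"
          by (intro borel_measurable_times_ennreal measurable_const) auto
        have "(\<integral>\<^sup>+a. ennreal (exp (- \<mu> * w x k)) * (ennreal (exp (- \<mu> * a)) * Gi) \<partial>PA)
           = ennreal (exp (- \<mu> * w x k)) * (\<integral>\<^sup>+a. ennreal (exp (- \<mu> * a)) * Gi \<partial>PA)"
          by (rule nn_integral_cmult[OF me2])
        also have "(\<integral>\<^sup>+a. ennreal (exp (- \<mu> * a)) * Gi \<partial>PA) = (\<integral>\<^sup>+a. ennreal (exp (- \<mu> * a)) \<partial>PA) * Gi"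
          by (rule nn_integral_multc[OF me])
        finally show ?thesis .
      qed
      finally show ?thesis using True alpha_e by simp
    qed
  qed
  also have "\<dots> = (\<integral>\<^sup>+x. (if pos x k then ennreal (exp (- \<mu> * w x k)) else 0) \<partial>PiM (J k) P) * (ennreal \<alpha> * Gi)"
  proof (rule nn_integral_multc)
    have [measurable]: "(\<lambda>x. w x k) \<in> borel_measurable (PiM (J k) P)"
      by (rule meas_w[OF sets_P]) simp
    have [measurable]: "Measurable.pred (PiM (J k) P) (\<lambda>x. pos x k)"
      by (rule meas_pos[OF sets_P]) simp
    show "(\<lambda>x. if pos x k then ennreal (exp (- \<mu> * w x k)) else 0) \<in> borel_measurable (PiM (J k) P)"
      by measurable
  qed
  finally show ?thesis unfolding F_def Gi_def by (simp add: mult.assoc)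
qed


definition "p k = \<alpha> * (\<alpha> / 2) ^ (k - 2)"

lemma p_nonneg: "0 \<le> p k" unfolding p_def using alpha_bounds by simp

lemma inv:
  assumes k: "2 \<le> k" and g[measurable]: "g \<in> borel_measurable borel"
  shows "(\<integral>\<^sup>+x. (if pos x k then g (w x k) else 0) \<partial>PiM (J k) P) = ennreal (p k) * (\<integral>\<^sup>+u. g u \<partial>PB)"
  using k g
proof (induction k arbitrary: g rule: dec_induct)
  case base
  have "(\<integral>\<^sup>+x. (if pos x (Suc 0) then ennreal (exp (- \<mu> * w x (Suc 0))) else 0) \<partial>PiM (J (Suc 0)) P) = 1"
    by (simp add: pos_1 J_1 PiM_empty)
  moreover have e2: "(2::nat) = Suc (Suc 0)" by simp
  ultimately show ?case unfolding e2 using step[of "Suc 0" g] base by (simp del: w.simps add: p_def)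
next
  case (step k)
  have k1: "1 \<le> k" using step by simp
  have "(\<integral>\<^sup>+x. (if pos x k then ennreal (exp (- \<mu> * w x k)) else 0) \<partial>PiM (J k) P) = ennreal (p k) * ennreal (1/2)"
    using step.IH[of "\<lambda>u. ennreal (exp (- \<mu> * u))"] exp_half[OF mu] unfolding PB_def by simp
  then have "(\<integral>\<^sup>+x. (if pos x (Suc k) then g (w x (Suc k)) else 0) \<partial>PiM (J (Suc k)) P)
      = ennreal (p k) * ennreal (1/2) * ennreal \<alpha> * (\<integral>\<^sup>+u. g u \<partial>PB)"
    using cyc.step[OF cyc_axioms k1 step.prems] by simp
  also have "ennreal (p k) * ennreal (1/2) * ennreal \<alpha> = ennreal (p (Suc k))"
  proof -
    have e: "Suc k - 2 = Suc (k - 2)" using step.hyps by simp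
    have "p k * (1/2) * \<alpha> = p (Suc k)" unfolding p_def e power_Suc
      by (simp add: algebra_simps)
    have m1: "ennreal (p k * (1/2) * \<alpha>) = ennreal (p k * (1/2)) * ennreal \<alpha>"
      by (rule ennreal_mult) (use p_nonneg[of k] alpha_bounds in auto)
    have m2: "ennreal (p k * (1/2)) = ennreal (p k) * ennreal (1/2)"
      by (rule ennreal_mult) (use p_nonneg[of k] in auto)
    show ?thesis unfolding m2[symmetric] m1[symmetric] \<open>p k * (1/2) * \<alpha> = p (Suc k)\<close> ..
  qed
  finally show ?case .
qed

lemma transfer:
  assumes k: "2 \<le> k"
  shows "{\<omega>\<in>space M. pos (\<lambda>i. case_sum A B i \<omega>) k} \<in> sets M"
    "measure M {\<omega>\<in>space M. pos (\<lambda>i. case_sum A B i \<omega>) k} = p k"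
proof -
  define Xv where "Xv \<omega> = (\<lambda>i\<in>J k. case_sum A B i \<omega>)" for \<omega>
  have JI: "J k \<subseteq> I0" using J_I0 k by simp
  have ne: "J k \<noteq> {}" using k unfolding J_def by auto
  have rvJ: "i \<in> J k \<Longrightarrow> random_variable borel (case_sum A B i)" for i using rv JI by auto
  have ind: "indep_vars (\<lambda>_. borel) (case_sum A B) (J k)"
    using indep_vars_subset[OF indep JI[unfolded I0_def]] by simp
  have d1: "distr M (PiM (J k) (\<lambda>_. borel)) Xv = PiM (J k) (\<lambda>i. distr M borel (case_sum A B i))"
    using ind indep_vars_iff_distr_eq_PiM'[OF ne rvJ] unfolding Xv_def by simp
  also have "\<dots> = PiM (J k) P"
    by (rule PiM_cong) (use distr_X JI in auto)
  finally have d1': "distr M (PiM (J k) (\<lambda>_. borel)) Xv = PiM (J k) P" .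
  have "distr M (PiM (J k) P) Xv = distr M (PiM (J k) (\<lambda>_. borel)) Xv"
    by (rule distr_cong) (auto intro!: sets_PiM_cong simp: sets_P)
  with d1' have d: "distr M (PiM (J k) P) Xv = PiM (J k) P" by simp
  have mX: "Xv \<in> measurable M (PiM (J k) P)" unfolding Xv_def
    by (rule measurable_restrict) (use rvJ measurable_cong_sets[OF refl sets_P] in blast)
  define S where "S = {x\<in>space (PiM (J k) P). pos x k}"
  have Ss: "S \<in> sets (PiM (J k) P)" unfolding S_def
    using meas_pos[OF sets_P, of k "J k"] unfolding pred_def by simp
  have pre: "Xv -` S \<inter> space M = {\<omega>\<in>space M. pos (\<lambda>i. case_sum A B i \<omega>) k}"
  proof -
    have "pos (Xv \<omega>) k = pos (\<lambda>i. case_sum A B i \<omega>) k" for \<omega>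
      unfolding Xv_def by (rule pos_cong) (auto simp: J_def)
    then show ?thesis unfolding S_def using measurable_space[OF mX] by auto
  qed
  show "{\<omega>\<in>space M. pos (\<lambda>i. case_sum A B i \<omega>) k} \<in> sets M"
    using measurable_sets[OF mX Ss] pre by simp
  have "emeasure M {\<omega>\<in>space M. pos (\<lambda>i. case_sum A B i \<omega>) k} = emeasure (PiM (J k) P) S"
    using emeasure_distr[OF mX Ss] d pre by simp
  also have "\<dots> = (\<integral>\<^sup>+x. (if pos x k then (\<lambda>_. 1) (w x k) else 0) \<partial>PiM (J k) P)"
    by (subst nn_integral_indicator[OF Ss, symmetric]) (auto intro!: nn_integral_cong simp: S_def indicator_def)
  also have "\<dots> = ennreal (p k)"
    using inv[OF k, of "\<lambda>_. 1"] prob_space.emeasure_space_1[OF prob_PB] by simp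
  finally show "measure M {\<omega>\<in>space M. pos (\<lambda>i. case_sum A B i \<omega>) k} = p k"
    using p_nonneg by (simp add: measure_def)
qed


definition "E k = {\<omega>\<in>space M. pos (\<lambda>i. case_sum A B i \<omega>) k}"

lemma E_1: "E (Suc 0) = space M" unfolding E_def by (simp add: pos_1)

lemma E_sets: "k \<ge> 1 \<Longrightarrow> E k \<in> sets M"
proof -
  assume "k \<ge> 1"
  then consider "k = Suc 0" | "k \<ge> 2" by linarith
  then show ?thesis
    by cases (simp add: E_1, simp add: E_def transfer)
qed

lemma PE: "k \<ge> 1 \<Longrightarrow> measure M (E k) = (if k = 1 then 1 else p k)"
proof -
  assume "k \<ge> 1"
  then consider "k = Suc 0" | "k \<ge> 2" by linarith
  then show ?thesis
    by cases (simp add: E_1 prob_space, simp add: E_def transfer)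
qed

lemma E_mono: "k \<ge> 1 \<Longrightarrow> E (Suc k) \<subseteq> E k" unfolding E_def using pos_Suc by auto

definition "Ninf = {\<omega>\<in>space M. \<forall>k. pos (\<lambda>i. case_sum A B i \<omega>) k}"

lemma Ninf_null: "Ninf \<in> null_sets M"
proof -
  have pm: "pos x k" if "pos x (Suc k)" for x k using that unfolding pos_def by auto
  have "(\<forall>k. pos x k) \<longleftrightarrow> (\<forall>k. pos x (Suc k))" for x using pm by blast
  then have eq: "Ninf = space M \<inter> (\<Inter>k. E (Suc k))"
    unfolding Ninf_def E_def by auto
  have Ns: "Ninf \<in> sets M" unfolding eq using E_sets by auto
  have le: "measure M Ninf \<le> (1/2) ^ j" for j
  proof -
    have "Ninf \<subseteq> E (j + 2)" unfolding Ninf_def E_def by auto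
    then have "measure M Ninf \<le> measure M (E (j+2))"
      by (intro finite_measure_mono E_sets) auto
    also have "\<dots> = p (j + 2)" using PE[of "j+2"] by simp
    also have "\<dots> = \<alpha> * (\<alpha>/2)^j" unfolding p_def by simp
    also have "\<dots> \<le> 1 * (1/2)^j"
      using alpha_bounds by (intro mult_mono power_mono) auto
    finally show ?thesis by simp
  qed
  have "measure M Ninf \<le> 0"
    by (rule LIMSEQ_le_const[OF LIMSEQ_realpow_zero[of "1/2::real"]]) (use le in auto)
  then have "measure M Ninf = 0" using measure_nonneg[of M Ninf] by linarith
  then show ?thesis using Ns by (simp add: emeasure_eq_measure null_sets_def)
qed

lemma main:
  assumes n: "n \<ge> 1"
  shows "measure M {\<omega> \<in> space M. cycle_len A B \<omega> = n} =
           (let \<alpha> = integral\<^sup>L M (\<lambda>\<omega>. exp (- \<mu> * A 1 \<omega>)) in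
            if n = 1 then 1 - \<alpha>
            else (1 - \<alpha> / 2) * (\<alpha> / 2) ^ (n - 2) * \<alpha>)"
proof -
  have ev: "{\<omega> \<in> space M. cycle_len A B \<omega> = n} = (E n - E (Suc n)) \<union> (if (LEAST m::nat. False) = n then Ninf else {})"
    unfolding E_def Ninf_def using cycle_len_iff[OF n, of A B] pos_Suc n by auto
  have "measure M {\<omega> \<in> space M. cycle_len A B \<omega> = n} = measure M (E n - E (Suc n))"
  proof (cases "(LEAST m::nat. False) = n")
    case True
    then show ?thesis unfolding ev
      using measure_Un_null_set[OF _ Ninf_null, of "E n - E (Suc n)"] E_sets n by auto
  next
    case False
    then show ?thesis unfolding ev by simp
  qed
  also have "\<dots> = measure M (E n) - measure M (E (Suc n))"
    by (rule finite_measure_Diff) (use E_sets E_mono n in auto)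
  also have "\<dots> = (if n = 1 then 1 - \<alpha> else (1 - \<alpha> / 2) * (\<alpha> / 2) ^ (n - 2) * \<alpha>)"
  proof (cases "n = 1")
    case True
    then show ?thesis using PE[of 1] PE[of 2] by (simp add: p_def numeral_2_eq_2)
  next
    case False
    then have n2: "n \<ge> 2" using n by simp
    have e: "Suc n - 2 = Suc (n - 2)" using n2 by simp
    have m1: "measure M (E n) = \<alpha> * (\<alpha>/2)^(n-2)" using PE[of n] n2 unfolding p_def by simp
    have m2a: "measure M (E (Suc n)) = p (Suc n)" using PE[of "Suc n"] n by simp
    have key2: "\<And>x::real. \<alpha> * ((\<alpha>/2) * x) = \<alpha> * x * (\<alpha>/2)"
      by (simp add: algebra_simps)
    have m2: "measure M (E (Suc n)) = \<alpha> * (\<alpha>/2)^(n-2) * (\<alpha>/2)"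
      unfolding m2a p_def e power_Suc key2 ..
    have key: "\<And>x::real. \<alpha> * x - \<alpha> * x * (\<alpha>/2) = (1 - \<alpha>/2) * x * \<alpha>"
      by (simp add: algebra_simps)
    show ?thesis unfolding m1 m2 key using False by simp
  qed
  finally show ?thesis by (simp only: Let_def \<alpha>_def)
qed

end

theorem theorem3p3:
  fixes M :: "'a measure" and A B :: "nat \<Rightarrow> 'a \<Rightarrow> real" and \<mu> :: real and n :: nat
  assumes "prob_space M"
    and "\<mu> > 0"
    and indep: "prob_space.indep_vars M (\<lambda>_. borel)
                 (\<lambda>i. case i of Inl k \<Rightarrow> A k | Inr k \<Rightarrow> B k)
                 ({Inl k | k. k \<ge> 1} \<union> {Inr k | k. k \<ge> 1})"
    and A_nonneg: "\<And>k \<omega>. k \<ge> 1 \<Longrightarrow> \<omega> \<in> space M \<Longrightarrow> A k \<omega> \<ge> 0"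
    and A_ident: "\<And>k. k \<ge> 1 \<Longrightarrow> distr M borel (A k) = distr M borel (A 1)"
    and B_exp: "\<And>k. k \<ge> 1 \<Longrightarrow> distributed M lborel (B k) (exponential_density \<mu>)"
    and "n \<ge> 1"
  shows "measure M {\<omega> \<in> space M. cycle_len A B \<omega> = n} =
           (let \<alpha> = integral\<^sup>L M (\<lambda>\<omega>. exp (- \<mu> * A 1 \<omega>)) in
            if n = 1 then 1 - \<alpha>
            else (1 - \<alpha> / 2) * (\<alpha> / 2) ^ (n - 2) * \<alpha>)"
proof -
  interpret cyc M A B \<mu>
    by (intro cyc.intro cyc_axioms.intro assms(1-6))
  show ?thesis by (rule main) (rule assms(7))
qed

end
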